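(* Let $1\le p<\infty$ and $\eta\in(0,1)$. There exist $\beta\in(1/2,1)$ and $C_1>0$, depending only on $\eta$, such that for every $\varepsilon>0$, every $f\in\mathcal{H}(\mathbb{D})$ and every $\xi\in\mathbb{T}$, setting $$\mathcal{A}=\Big\{\alpha\in\mathbb{D}:\ (1-|\alpha|)^p|f'(\alpha)|^p<\frac{\varepsilon}{m(\Delta_\eta(\alpha))}\int_{\Delta_\eta(\alpha)}(1-|z|)^p|f'(z)|^p\,dm(z)\Big\},$$ we have $$\int_{\mathcal{A}\cap\Gamma_{1/2}(\xi)}(1-|z|)^p|f'(z)|^p\frac{dm(z)}{1-|z|}\ \le\ \varepsilon\, C_1\int_{\Gamma_\beta(\xi)}(1-|z|)^p|f'(z)|^p\frac{dm(z)}{1-|z|}.$$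
   Context: $\mathbb{D}$ is the unit disc, $\mathbb{T}$ the unit circle, $dm$ normalized area measure, $\mathcal{H}(\mathbb{D})$ the analytic functions on $\mathbb{D}$. For $\beta\in(0,1)$ and $\xi\in\mathbb{T}$, $\Gamma_\beta(\xi)=\{z\in\mathbb{D}:|z|<\beta\}\cup\bigcup_{|z|<\beta}[z,\xi)$, where $[z,\xi)$ is the half-open segment from $z$ to $\xi$. For $\alpha\in\mathbb{D}$, $\Delta_\eta(\alpha)=\{z\in\mathbb{D}:|z-\alpha|<\eta(1-|\alpha|)\}$. *)

theory Defs
  imports "HOL-Analysis.Analysis"
begin

definition unit_disc :: "complex set" where
  "unit_disc = ball 0 1"

text \<open>Normalized area measure dm = dA / pi on the complex plane.\<close>
definition marea :: "complex measure" where
  "marea = density lborel (\<lambda>_. ennreal (1 / pi))"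

definition Gamma_region :: "real \<Rightarrow> complex \<Rightarrow> complex set" where
  "Gamma_region \<beta> \<xi> =
     {z \<in> unit_disc. cmod z < \<beta>} \<union> (\<Union>w\<in>{w. cmod w < \<beta>}. closed_segment w \<xi> - {\<xi>})"

definition Delta_region :: "real \<Rightarrow> complex \<Rightarrow> complex set" where
  "Delta_region \<eta> \<alpha> = {z \<in> unit_disc. cmod (z - \<alpha>) < \<eta> * (1 - cmod \<alpha>)}"

end

theory Submission
  imports Defs "HOL-Complex_Analysis.Complex_Analysis"
begin

lemma sets_marea[simp, measurable_cong]: "sets marea = sets borel"
  unfolding marea_def by simp
lemma space_marea[simp]: "space marea = UNIV"
  unfolding marea_def by simp

lemma lborel_sf_complex: "sigma_finite_measure (lborel :: complex measure)" by unfold_locales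

lemma marea_sigma_finite: "sigma_finite_measure marea"
proof -
  have "sigma_finite_measure (density (lborel::complex measure) (\<lambda>_. ennreal (1 / pi)))"
    apply (rule iffD2[OF sigma_finite_measure.sigma_finite_iff_density_finite[OF lborel_sf_complex]])
    apply auto
    done
  thus ?thesis unfolding marea_def .
qed

interpretation marea: sigma_finite_measure marea by (rule marea_sigma_finite)
interpretation marea_pair: pair_sigma_finite marea marea ..

lemma emeasure_marea_ball:
  assumes "r \<ge> 0"
  shows "emeasure marea (ball (c::complex) r) = ennreal (r^2)"
proof -
  have "emeasure marea (ball c r) = ennreal (1/pi) * emeasure lborel (ball c r)"
    unfolding marea_def by (rule emeasure_density_const) simp
  also have "\<dots> = ennreal (1/pi) * ennreal (pi * r^2)"
    using emeasure_ball[OF assms, of c] by (simp add: unit_ball_vol_2)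
  also have "\<dots> = ennreal (r^2)" by (simp add: ennreal_mult'[symmetric])
  finally show ?thesis .
qed

lemma norm_add_sq_inner:
  fixes a b :: complex
  shows "(cmod (a + b))^2 = (cmod a)^2 + 2 * (a \<bullet> b) + (cmod b)^2"
  by (simp add: power2_norm_eq_inner inner_add_left inner_add_right inner_commute)

lemma cone_in_Gamma:
  fixes K :: real and \<xi> z :: complex
  assumes K: "K \<ge> 1" and xi: "cmod \<xi> = 1" and cz: "cmod (z - \<xi>) < K * (1 - cmod z)"
  shows "z \<in> Gamma_region (1 - 1/(3*K^2)) \<xi>"
proof -
  define \<beta> where "\<beta> = 1 - 1/(3*K^2)"
  have Kpos: "K > 0" using K by simp
  have z1: "cmod z < 1"
  proof -
    have "0 \<le> cmod (z - \<xi>)" by simp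
    hence "0 < K * (1 - cmod z)" using cz by linarith
    thus ?thesis using Kpos by (simp add: zero_less_mult_iff)
  qed
  show ?thesis
  proof (cases "cmod z < \<beta>")
    case True
    thus ?thesis using z1 unfolding Gamma_region_def unit_disc_def \<beta>_def by auto
  next
    case False
    define u where "u = z - \<xi>"
    define d where "d = cmod u"
    have zne: "z \<noteq> \<xi>" using z1 xi by auto
    have dpos: "d > 0" using zne unfolding d_def u_def by simp
    have "d < K * (1 - \<beta>)" using cz False unfolding d_def u_def
      by (smt (verit, best) Kpos mult_left_mono)
    hence dlt: "d < 1/(3*K)" unfolding \<beta>_def using Kpos by (simp add: power2_eq_square field_simps)
    define c where "c = 1 / K"
    define w where "w = \<xi> + (c/d) *\<^sub>R u"
    define R where "R = \<xi> \<bullet> u"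
    have zsq: "(cmod z)^2 = 1 + 2*R + d^2"
      using norm_add_sq_inner[of \<xi> u] xi unfolding R_def d_def u_def by simp
    have "cmod z < 1 - d/K" using cz Kpos unfolding d_def u_def by (simp add: field_simps)
    moreover have "0 \<le> cmod z" by simp
    ultimately have "(cmod z)^2 < (1 - d/K)^2" by (simp add: power_strict_mono)
    moreover have "(1 - d/K)^2 = 1 - 2*d/K + d^2/K^2" using Kpos by (simp add: power2_eq_square field_simps)
    ultimately have R1: "2*R < -2*d/K + d^2/K^2 - d^2" using zsq by linarith
    have wsq: "(cmod w)^2 = 1 + 2*(c/d)*R + c^2"
      using norm_add_sq_inner[of \<xi> "(c/d) *\<^sub>R u"] xi dpos unfolding w_def R_def d_def
      by (simp add: power2_eq_square)
    have cd: "c/d > 0" using Kpos dpos unfolding c_def by simp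
    have "2*(c/d)*R < (c/d)*(-2*d/K + d^2/K^2 - d^2)"
      using mult_strict_left_mono[OF R1 cd] by (simp add: ac_simps)
    also have "\<dots> = -2/K^2 + d/K^3 - d/K" using dpos Kpos unfolding c_def
      by (simp add: field_simps power2_eq_square power3_eq_cube)
    finally have "(cmod w)^2 < 1 - 1/K^2 + d/K^3 - d/K" using wsq unfolding c_def
      by (simp add: power2_eq_square field_simps)
    also have "\<dots> \<le> 1 - 1/K^2 + d/K^3" using dpos Kpos by simp
    also have "\<dots> \<le> 1 - 1/K^2 + 1/(3*K^4)"
    proof -
      have "d/K^3 \<le> (1/(3*K))/K^3" using dlt Kpos by (intro divide_right_mono) auto
      also have "(1/(3*K))/K^3 = 1/(3*K^4)" by (simp add: eval_nat_numeral)
      finally show ?thesis by linarith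
    qed
    also have "\<dots> \<le> \<beta>^2"
    proof -
      define x where "x = 1/K^2"
      have x0: "0 < x" "x \<le> 1" unfolding x_def using K Kpos by (auto simp: power_le_one_iff)
      have e1: "1/(3*K^4) = x*x/3" unfolding x_def by (simp add: eval_nat_numeral)
      have e2: "\<beta> = 1 - x/3" unfolding x_def \<beta>_def by simp
      have xx: "x*x \<le> x" using x0 mult_left_mono[of x 1 x] by linarith
      moreover have "(1 - x/3)^2 = 1 - 2*x/3 + x*x/9" by (simp add: power2_eq_square algebra_simps)
      ultimately have "1 - x + x*x/3 \<le> (1 - x/3)^2" using x0 by linarith
      thus ?thesis using e1 e2 unfolding x_def by simp
    qed
    finally have "(cmod w)^2 < \<beta>^2" .
    moreover have "\<beta> > 0"
    proof -
      have "1 \<le> K^2" using K by (simp add: one_le_power)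
      hence "1/(3*K^2) \<le> 1/(3*1)" by (intro divide_left_mono) auto
      thus ?thesis unfolding \<beta>_def by linarith
    qed
    ultimately have wb: "cmod w < \<beta>" using power_less_imp_less_base[of "cmod w" 2 \<beta>] by simp
    have cpos: "c > 0" unfolding c_def using Kpos by simp
    have dc: "d/c < 1" using dlt Kpos unfolding c_def by (simp add: field_simps)
    have dc0: "0 \<le> d/c" using dpos cpos by simp
    have "(d/c) *\<^sub>R w = (d/c) *\<^sub>R \<xi> + ((d/c) * (c/d)) *\<^sub>R u"
      unfolding w_def by (simp add: scaleR_add_right)
    also have "(d/c) * (c/d) = 1" using dpos cpos by simp
    finally have dw: "(d/c) *\<^sub>R w = (d/c) *\<^sub>R \<xi> + u" by simp
    have zeq: "z = (1 - (1 - d/c)) *\<^sub>R w + (1 - d/c) *\<^sub>R \<xi>"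
    proof -
      have "(1 - (1 - d/c)) *\<^sub>R w + (1 - d/c) *\<^sub>R \<xi> = (d/c) *\<^sub>R w + (1 - d/c) *\<^sub>R \<xi>" by simp
      also have "\<dots> = \<xi> + u" unfolding dw by (simp add: algebra_simps)
      finally show ?thesis unfolding u_def by simp
    qed
    have "z \<in> closed_segment w \<xi>"
      unfolding closed_segment_def using zeq dc dc0 by (intro CollectI exI[of _ "1 - d/c"]) simp
    thus ?thesis using wb zne unfolding Gamma_region_def \<beta>_def by blast
  qed
qed

lemma Gamma_half_in_S:
  fixes \<xi> z :: complex
  assumes xi: "cmod \<xi> = 1" and z: "z \<in> Gamma_region (1/2) \<xi>"
  shows "cmod (z - \<xi>) < 4 * (1 - cmod z)"
proof -
  from z consider "cmod z < 1/2" | w where "cmod w < 1/2" "z \<in> closed_segment w \<xi>" "z \<noteq> \<xi>"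
    unfolding Gamma_region_def by auto
  thus ?thesis
  proof cases
    case 1
    have "cmod (z - \<xi>) \<le> cmod z + cmod \<xi>" by (rule norm_triangle_ineq4)
    hence "cmod (z - \<xi>) \<le> cmod z + 1" using xi by simp
    thus ?thesis using 1 by (simp add: algebra_simps)
  next
    case 2
    then obtain t where t: "0 \<le> t" "t \<le> 1" "z = (1 - t) *\<^sub>R w + t *\<^sub>R \<xi>"
      unfolding closed_segment_def by auto
    have "t \<noteq> 1" using t 2 by auto
    hence t1: "1 - t > 0" using t by simp
    have "z - \<xi> = (1 - t) *\<^sub>R (w - \<xi>)" using t by (simp add: algebra_simps)
    hence "cmod (z - \<xi>) = (1 - t) * cmod (w - \<xi>)" using t1 by simp
    also have "\<dots> \<le> (1 - t) * (3/2)"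
    proof -
      have "cmod (w - \<xi>) \<le> cmod w + cmod \<xi>" by (rule norm_triangle_ineq4)
      thus ?thesis using 2 xi t1 by (intro mult_left_mono) auto
    qed
    finally have A: "cmod (z - \<xi>) \<le> (1 - t) * (3/2)" .
    have "cmod z \<le> cmod ((1 - t) *\<^sub>R w) + cmod (t *\<^sub>R \<xi>)" using t norm_triangle_ineq by metis
    also have "\<dots> = (1 - t) * cmod w + t" using t xi t1 by simp
    finally have "cmod z \<le> (1 - t) * cmod w + t" .
    moreover have "(1 - t) * cmod w < (1 - t) * (1/2)" using 2 t1 by simp
    ultimately show ?thesis using A t1 by (simp add: algebra_simps)
  qed
qed

lemma hR_meas:
  fixes f :: "complex \<Rightarrow> complex" and p :: real
  assumes hol: "f holomorphic_on unit_disc" and p: "1 \<le> p"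
  shows "(\<lambda>z. indicator unit_disc z * ((1 - cmod z) powr p * cmod (deriv f z) powr p / (1 - cmod z)))
           \<in> borel_measurable borel"
proof -
  have op: "open unit_disc" unfolding unit_disc_def by simp
  have cd: "continuous_on unit_disc (deriv f)"
    using holomorphic_deriv[OF hol op] holomorphic_on_imp_continuous_on by blast
  have pos: "\<And>z. z \<in> unit_disc \<Longrightarrow> 0 < 1 - cmod z" unfolding unit_disc_def by simp
  have cn: "continuous_on unit_disc (\<lambda>z. cmod (deriv f z))"
    by (rule continuous_on_compose2[OF continuous_on_norm_id cd]) auto
  have c1: "continuous_on unit_disc (\<lambda>z. cmod (deriv f z) powr p)"
    by (rule continuous_on_powr'[OF cn continuous_on_const]) (use p in auto)
  have c2: "continuous_on unit_disc (\<lambda>z. (1 - cmod z) powr p)"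
    by (rule continuous_on_powr'[OF _ continuous_on_const]) (use p pos in \<open>auto intro!: continuous_intros less_imp_le\<close>)
  have c3: "continuous_on unit_disc (\<lambda>z. 1 - cmod z)" by (intro continuous_intros)
  have c: "continuous_on unit_disc (\<lambda>z. (1 - cmod z) powr p * cmod (deriv f z) powr p / (1 - cmod z))"
    by (intro continuous_on_divide continuous_on_mult c1 c2 c3) (use pos in force)
  have "(\<lambda>z. indicator unit_disc z *\<^sub>R ((1 - cmod z) powr p * cmod (deriv f z) powr p / (1 - cmod z)))
           \<in> borel_measurable borel"
    by (rule borel_measurable_continuous_on_indicator[OF _ c]) (simp add: op)
  thus ?thesis by simp
qed

lemma test_meas:
  fixes H :: "complex \<Rightarrow> ennreal" and S :: "complex set"
  assumes [measurable]: "H \<in> borel_measurable borel" and [measurable]: "S \<in> sets borel"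
  shows "(\<lambda>(\<alpha>, z). ennreal c0 * indicator S \<alpha> * ennreal (1/(1 - cmod \<alpha>)^2) *
     (if cmod (z - \<alpha>) < \<eta> * (1 - cmod \<alpha>) then 1 else 0) * H z) \<in> borel_measurable (marea \<Otimes>\<^sub>M marea)"
  by measurable

theorem lemma3:
  fixes \<eta> :: real
  assumes "0 < \<eta>" and "\<eta> < 1"
  shows "\<exists>\<beta> C1. 1/2 < \<beta> \<and> \<beta> < 1 \<and> 0 < C1 \<and>
    (\<forall>(p::real) (\<epsilon>::real) (f::complex \<Rightarrow> complex) (\<xi>::complex).
       1 \<le> p \<longrightarrow> 0 < \<epsilon> \<longrightarrow> f holomorphic_on unit_disc \<longrightarrow> cmod \<xi> = 1 \<longrightarrow>
       (let A = {\<alpha> \<in> unit_disc.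
                   ennreal ((1 - cmod \<alpha>) powr p * cmod (deriv f \<alpha>) powr p)
                   < ennreal \<epsilon> / emeasure marea (Delta_region \<eta> \<alpha>) *
                     (\<integral>\<^sup>+ z. indicator (Delta_region \<eta> \<alpha>) z *
                        ennreal ((1 - cmod z) powr p * cmod (deriv f z) powr p) \<partial>marea)}
        in (\<integral>\<^sup>+ z. indicator (A \<inter> Gamma_region (1/2) \<xi>) z *
               ennreal ((1 - cmod z) powr p * cmod (deriv f z) powr p / (1 - cmod z)) \<partial>marea)
           \<le> ennreal \<epsilon> * ennreal C1 *
             (\<integral>\<^sup>+ z. indicator (Gamma_region \<beta> \<xi>) z *
               ennreal ((1 - cmod z) powr p * cmod (deriv f z) powr p / (1 - cmod z)) \<partial>marea)))"
proof -
  note eta = assms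
  define K where "K = 5 / (1 - \<eta>)"
  define \<beta> where "\<beta> = 1 - 1/(3*K^2)"
  define C1 where "C1 = (1 + \<eta>)^3 / (1 - \<eta>)^2"
  have K5: "K \<ge> 5" unfolding K_def using eta by (simp add: field_simps)
  have K1: "K \<ge> 1" using K5 by simp
  have Kpos: "K > 0" using K5 by simp
  have b1: "\<beta> < 1" unfolding \<beta>_def using Kpos by simp
  have b2: "1/2 < \<beta>"
  proof -
    have "25 \<le> K^2" using K5 power_mono[of 5 K 2] by simp
    hence "1/(3*K^2) \<le> 1/(3*25)" by (intro divide_left_mono) auto
    thus ?thesis unfolding \<beta>_def by simp
  qed
  have C1pos: "C1 > 0" unfolding C1_def using eta by simp
  have main: "(let A = {\<alpha> \<in> unit_disc.
                   ennreal ((1 - cmod \<alpha>) powr p * cmod (deriv f \<alpha>) powr p)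
                   < ennreal \<epsilon> / emeasure marea (Delta_region \<eta> \<alpha>) *
                     (\<integral>\<^sup>+ z. indicator (Delta_region \<eta> \<alpha>) z *
                        ennreal ((1 - cmod z) powr p * cmod (deriv f z) powr p) \<partial>marea)}
        in (\<integral>\<^sup>+ z. indicator (A \<inter> Gamma_region (1/2) \<xi>) z *
               ennreal ((1 - cmod z) powr p * cmod (deriv f z) powr p / (1 - cmod z)) \<partial>marea)
           \<le> ennreal \<epsilon> * ennreal C1 *
             (\<integral>\<^sup>+ z. indicator (Gamma_region \<beta> \<xi>) z *
               ennreal ((1 - cmod z) powr p * cmod (deriv f z) powr p / (1 - cmod z)) \<partial>marea))"
    if p: "1 \<le> p" and ep: "0 < \<epsilon>" and hol: "f holomorphic_on unit_disc" and xi: "cmod \<xi> = 1"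
    for p \<epsilon> :: real and f :: "complex \<Rightarrow> complex" and \<xi> :: complex
  proof -
    define g where "g z = (1 - cmod z) powr p * cmod (deriv f z) powr p" for z
    define A where "A = {\<alpha> \<in> unit_disc.
                   ennreal (g \<alpha>)
                   < ennreal \<epsilon> / emeasure marea (Delta_region \<eta> \<alpha>) *
                     (\<integral>\<^sup>+ z. indicator (Delta_region \<eta> \<alpha>) z * ennreal (g z) \<partial>marea)}"
    define H where "H z = ennreal (indicator unit_disc z * (g z / (1 - cmod z)))" for z
    define S where "S = {z. cmod (z - \<xi>) < 4 * (1 - cmod z)}"
    define T where "T = {z. cmod (z - \<xi>) < K * (1 - cmod z)}"
    define c0 where "c0 = \<epsilon> * (1 + \<eta>) / \<eta>^2"
    define c1 where "c1 = (1 + \<eta>)^2 * \<eta>^2 / (1 - \<eta>)^2"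
    define F where "F \<alpha> z = ennreal c0 * indicator S \<alpha> * ennreal (1/(1 - cmod \<alpha>)^2) *
     (if cmod (z - \<alpha>) < \<eta> * (1 - cmod \<alpha>) then 1 else 0) * H z" for \<alpha> z
    have g0: "g z \<ge> 0" for z unfolding g_def by simp
    have Hm[measurable]: "H \<in> borel_measurable borel"
      unfolding H_def g_def using hR_meas[OF hol p] by measurable
    have Hm2[measurable]: "H \<in> borel_measurable marea"
      using Hm by (simp add: measurable_cong_sets[OF sets_marea refl])
    have Bm[measurable]: "ball c rr \<in> sets marea" for c :: complex and rr by simp
    have Sm[measurable]: "S \<in> sets borel" unfolding S_def by measurable
    have Tm[measurable]: "T \<in> sets borel" unfolding T_def by measurable
    have Fm: "case_prod F \<in> borel_measurable (marea \<Otimes>\<^sub>M marea)"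
      unfolding F_def by measurable
    have SD: "z \<in> S \<Longrightarrow> cmod z < 1" for z
    proof -
      assume "z \<in> S"
      hence "cmod (z - \<xi>) < 4 * (1 - cmod z)" unfolding S_def by simp
      hence "0 < 4 * (1 - cmod z)" using norm_ge_zero[of "z - \<xi>"] by linarith
      thus ?thesis by simp
    qed
    have HD: "z \<in> unit_disc \<Longrightarrow> H z = ennreal (g z / (1 - cmod z))" for z
      unfolding H_def by simp

    have step1: "indicator (A \<inter> Gamma_region (1/2) \<xi>) \<alpha> * ennreal (g \<alpha> / (1 - cmod \<alpha>))
                 \<le> (\<integral>\<^sup>+ z. F \<alpha> z \<partial>marea)" for \<alpha>
    proof (cases "\<alpha> \<in> A \<inter> Gamma_region (1/2) \<xi>")
      case False thus ?thesis by simp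
    next
      case True
      hence aA: "\<alpha> \<in> A" and aG: "\<alpha> \<in> Gamma_region (1/2) \<xi>" by auto
      have aS: "\<alpha> \<in> S" unfolding S_def using Gamma_half_in_S[OF xi aG] by simp
      define a where "a = 1 - cmod \<alpha>"
      define r where "r = \<eta> * a"
      have apos: "a > 0" unfolding a_def using SD[OF aS] by simp
      have rpos: "r > 0" unfolding r_def using apos eta by simp
      have Del: "Delta_region \<eta> \<alpha> = ball \<alpha> r"
      proof (rule set_eqI)
        fix z
        show "z \<in> Delta_region \<eta> \<alpha> \<longleftrightarrow> z \<in> ball \<alpha> r"
        proof
          assume "z \<in> Delta_region \<eta> \<alpha>"
          thus "z \<in> ball \<alpha> r" unfolding Delta_region_def r_def a_def
            by (simp add: dist_norm norm_minus_commute)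
        next
          assume zb: "z \<in> ball \<alpha> r"
          hence zr: "cmod (z - \<alpha>) < r" by (simp add: dist_norm norm_minus_commute)
          have "cmod z \<le> cmod \<alpha> + cmod (z - \<alpha>)" using norm_triangle_ineq2[of z \<alpha>] by simp
          moreover have "r < a" unfolding r_def using apos eta by simp
          ultimately have "cmod z < 1" using zr unfolding a_def by linarith
          thus "z \<in> Delta_region \<eta> \<alpha>" using zr unfolding Delta_region_def unit_disc_def r_def a_def
            by simp
        qed
      qed
      have mD: "emeasure marea (Delta_region \<eta> \<alpha>) = ennreal (r^2)"
        unfolding Del using emeasure_marea_ball rpos by simp
      define J where "J = (\<integral>\<^sup>+ z. indicator (ball \<alpha> r) z * H z \<partial>marea)"
      define I where "I = (\<integral>\<^sup>+ z. indicator (Delta_region \<eta> \<alpha>) z * ennreal (g z) \<partial>marea)"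
      have lt: "ennreal (g \<alpha>) < ennreal \<epsilon> / ennreal (r^2) * I"
        using aA unfolding A_def I_def by (simp add: mD)
      have IJ: "I \<le> ennreal ((1 + \<eta>) * a) * J"
      proof -
        have "I \<le> (\<integral>\<^sup>+ z. ennreal ((1 + \<eta>) * a) * (indicator (ball \<alpha> r) z * H z) \<partial>marea)"
          unfolding I_def
        proof (rule nn_integral_mono)
          fix z
          show "indicator (Delta_region \<eta> \<alpha>) z * ennreal (g z)
                \<le> ennreal ((1 + \<eta>) * a) * (indicator (ball \<alpha> r) z * H z)"
          proof (cases "z \<in> ball \<alpha> r")
            case False thus ?thesis unfolding Del by simp
          next
            case True
            hence zD: "z \<in> unit_disc" using Del unfolding Delta_region_def by auto
            hence bz: "0 < 1 - cmod z" unfolding unit_disc_def by simp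
            have zr: "cmod (z - \<alpha>) < r" using True by (simp add: dist_norm norm_minus_commute)
            have "cmod \<alpha> \<le> cmod z + cmod (z - \<alpha>)" using norm_triangle_ineq2[of \<alpha> z]
              by (simp add: norm_minus_commute)
            hence le: "1 - cmod z \<le> (1 + \<eta>) * a" using zr unfolding r_def a_def
              by (simp add: algebra_simps)
            have "g z = (1 - cmod z) * (g z / (1 - cmod z))" using bz by simp
            also have "\<dots> \<le> ((1 + \<eta>) * a) * (g z / (1 - cmod z))"
              using le g0[of z] bz by (intro mult_right_mono) auto
            finally have "ennreal (g z) \<le> ennreal ((1 + \<eta>) * a) * ennreal (g z / (1 - cmod z))"
              using g0[of z] bz eta apos by (subst ennreal_mult[symmetric]) (auto intro: ennreal_leI)
            thus ?thesis using True zD Del HD[OF zD] by simp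
          qed
        qed
        also have "\<dots> = ennreal ((1 + \<eta>) * a) * J" unfolding J_def
          by (rule nn_integral_cmult) measurable
        finally show ?thesis .
      qed
      have "ennreal (g \<alpha> / a) = ennreal (g \<alpha>) * ennreal (1 / a)"
        using g0[of \<alpha>] apos by (simp add: ennreal_mult[symmetric])
      also have "\<dots> \<le> (ennreal \<epsilon> / ennreal (r^2) * I) * ennreal (1 / a)"
        using lt by (intro mult_right_mono) auto
      also have "\<dots> \<le> (ennreal \<epsilon> / ennreal (r^2) * (ennreal ((1 + \<eta>) * a) * J)) * ennreal (1 / a)"
        using IJ by (intro mult_right_mono mult_left_mono) auto
      also have "\<dots> = ennreal (\<epsilon> / r^2 * ((1 + \<eta>) * a) * (1 / a)) * J"
        using ep rpos apos eta
        by (simp add: divide_ennreal ennreal_mult[symmetric] mult_ac)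
      also have "\<epsilon> / r^2 * ((1 + \<eta>) * a) * (1 / a) = c0 * (1 / a^2)"
        unfolding c0_def r_def using apos eta by (simp add: field_simps power2_eq_square)
      also have "ennreal (c0 * (1 / a^2)) * J = (\<integral>\<^sup>+ z. F \<alpha> z \<partial>marea)"
      proof -
        have "(\<integral>\<^sup>+ z. F \<alpha> z \<partial>marea) = (\<integral>\<^sup>+ z. ennreal (c0 * (1 / a^2)) * (indicator (ball \<alpha> r) z * H z) \<partial>marea)"
        proof (rule nn_integral_cong)
          fix z
          have "c0 \<ge> 0" unfolding c0_def using ep eta by simp
          thus "F \<alpha> z = ennreal (c0 * (1 / a^2)) * (indicator (ball \<alpha> r) z * H z)"
            unfolding F_def using aS
            by (simp add: ennreal_mult[symmetric] a_def r_def dist_norm norm_minus_commute indicator_def)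
        qed
        also have "\<dots> = ennreal (c0 * (1 / a^2)) * J" unfolding J_def
          by (rule nn_integral_cmult) measurable
        finally show ?thesis by simp
      qed
      finally show ?thesis using True unfolding a_def by simp
    qed

    have step3: "(\<integral>\<^sup>+ \<alpha>. F \<alpha> z \<partial>marea) \<le> ennreal (c0 * c1) * (indicator T z * H z)" for z
    proof (cases "z \<in> unit_disc")
      case False
      hence "\<And>\<alpha>. F \<alpha> z = 0" unfolding F_def H_def by simp
      thus ?thesis by simp
    next
      case zD: True
      define b where "b = 1 - cmod z"
      have bpos: "b > 0" using zD unfolding b_def unit_disc_def by simp
      define r' where "r' = \<eta> * b / (1 - \<eta>)"
      have r'pos: "r' \<ge> 0" unfolding r'_def using bpos eta by simp
      have c0pos: "c0 \<ge> 0" unfolding c0_def using ep eta by simp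
      define cc where "cc = c0 * (1 + \<eta>)^2 / b^2"
      have "(\<integral>\<^sup>+ \<alpha>. F \<alpha> z \<partial>marea) \<le> (\<integral>\<^sup>+ \<alpha>. (ennreal cc * (indicator T z * H z)) * indicator (ball z r') \<alpha> \<partial>marea)"
      proof (rule nn_integral_mono)
        fix \<alpha>
        show "F \<alpha> z \<le> (ennreal cc * (indicator T z * H z)) * indicator (ball z r') \<alpha>"
        proof (cases "\<alpha> \<in> S \<and> cmod (z - \<alpha>) < \<eta> * (1 - cmod \<alpha>)")
          case False
          hence "F \<alpha> z = 0" unfolding F_def by (auto simp: indicator_def)
          thus ?thesis by simp
        next
          case True
          hence aS: "\<alpha> \<in> S" and cl: "cmod (z - \<alpha>) < \<eta> * (1 - cmod \<alpha>)" by auto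
          define a where "a = 1 - cmod \<alpha>"
          have apos: "a > 0" unfolding a_def using SD[OF aS] by simp
          have t1: "cmod \<alpha> \<le> cmod z + cmod (z - \<alpha>)" using norm_triangle_ineq2[of \<alpha> z]
            by (simp add: norm_minus_commute)
          have t2: "cmod z \<le> cmod \<alpha> + cmod (z - \<alpha>)" using norm_triangle_ineq2[of z \<alpha>] by simp
          have ub: "b \<le> (1 + \<eta>) * a" using t1 cl unfolding a_def b_def by (simp add: algebra_simps)
          have lb: "(1 - \<eta>) * a \<le> b" using t2 cl unfolding a_def b_def by (simp add: algebra_simps)
          have ab: "a \<le> b / (1 - \<eta>)" using lb eta by (simp add: field_simps)
          have zT: "z \<in> T"
          proof -
            have "cmod (z - \<xi>) \<le> cmod (\<alpha> - \<xi>) + cmod (z - \<alpha>)"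
              using norm_triangle_ineq[of "\<alpha> - \<xi>" "z - \<alpha>"] by simp
            also have "\<dots> < 4 * a + \<eta> * a" using aS cl unfolding S_def a_def by simp
            also have "\<dots> \<le> 5 * a" using eta apos by simp
            also have "\<dots> \<le> 5 * (b / (1 - \<eta>))" using ab by simp
            also have "\<dots> = K * b" unfolding K_def by simp
            finally show ?thesis unfolding T_def b_def by simp
          qed
          have aball: "\<alpha> \<in> ball z r'"
          proof -
            have "cmod (z - \<alpha>) < \<eta> * a" using cl unfolding a_def .
            also have "\<dots> \<le> \<eta> * (b / (1 - \<eta>))" using ab eta by (intro mult_left_mono) auto
            finally show ?thesis unfolding r'_def by (simp add: dist_norm)
          qed
          have inv: "1 / a^2 \<le> (1 + \<eta>)^2 / b^2"
          proof -
            have "b / (1 + \<eta>) \<le> a" using ub eta by (simp add: field_simps)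
            hence "(b / (1 + \<eta>))^2 \<le> a^2" using bpos eta by (intro power_mono) auto
            hence "1 / a^2 \<le> 1 / (b / (1 + \<eta>))^2" using bpos eta apos
              by (intro divide_left_mono) auto
            thus ?thesis by (simp add: power_divide)
          qed
          have "F \<alpha> z = ennreal c0 * ennreal (1 / a^2) * H z"
            unfolding F_def using True unfolding a_def by simp
          also have "\<dots> \<le> ennreal c0 * ennreal ((1 + \<eta>)^2 / b^2) * H z"
            using inv by (intro mult_right_mono mult_left_mono ennreal_leI) auto
          also have "\<dots> = (ennreal cc * (indicator T z * H z)) * indicator (ball z r') \<alpha>"
            unfolding cc_def using zT aball c0pos by (simp add: ennreal_mult[symmetric] mult.assoc)
          finally show ?thesis .
        qed
      qed
      also have "\<dots> = (ennreal cc * (indicator T z * H z)) * emeasure marea (ball z r')"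
        by (rule nn_integral_cmult_indicator) simp
      also have "\<dots> = (ennreal cc * (indicator T z * H z)) * ennreal (r'^2)"
        using emeasure_marea_ball[OF r'pos] by simp
      also have "\<dots> = ennreal (cc * r'^2) * (indicator T z * H z)"
        using c0pos unfolding cc_def by (simp add: ennreal_mult[symmetric] mult_ac)
      also have "cc * r'^2 = c0 * c1"
      proof -
        have ne: "1 - \<eta> \<noteq> 0" "b \<noteq> 0" using eta bpos by auto
        show ?thesis unfolding cc_def r'_def c1_def
          by (simp add: power_divide power_mult_distrib) (simp add: field_simps ne)
      qed
      finally show ?thesis .
    qed

    have "(\<integral>\<^sup>+ \<alpha>. indicator (A \<inter> Gamma_region (1/2) \<xi>) \<alpha> * ennreal (g \<alpha> / (1 - cmod \<alpha>)) \<partial>marea)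
          \<le> (\<integral>\<^sup>+ \<alpha>. (\<integral>\<^sup>+ z. F \<alpha> z \<partial>marea) \<partial>marea)"
      by (rule nn_integral_mono) (rule step1)
    also have "\<dots> = (\<integral>\<^sup>+ z. (\<integral>\<^sup>+ \<alpha>. F \<alpha> z \<partial>marea) \<partial>marea)"
      using marea_pair.Fubini'[OF Fm] by simp
    also have "\<dots> \<le> (\<integral>\<^sup>+ z. ennreal (c0 * c1) * (indicator T z * H z) \<partial>marea)"
      by (rule nn_integral_mono) (rule step3)
    also have "\<dots> = ennreal (c0 * c1) * (\<integral>\<^sup>+ z. indicator T z * H z \<partial>marea)"
      by (rule nn_integral_cmult) measurable
    also have "\<dots> \<le> ennreal (c0 * c1) *
        (\<integral>\<^sup>+ z. indicator (Gamma_region \<beta> \<xi>) z * ennreal (g z / (1 - cmod z)) \<partial>marea)"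
    proof (intro mult_left_mono nn_integral_mono)
      fix z
      show "indicator T z * H z \<le> indicator (Gamma_region \<beta> \<xi>) z * ennreal (g z / (1 - cmod z))"
      proof (cases "z \<in> T")
        case False thus ?thesis by simp
      next
        case True
        hence cz: "cmod (z - \<xi>) < K * (1 - cmod z)" unfolding T_def by simp
        have "z \<in> Gamma_region \<beta> \<xi>" unfolding \<beta>_def by (rule cone_in_Gamma[OF K1 xi cz])
        moreover have "z \<in> unit_disc"
        proof -
          have "0 < K * (1 - cmod z)" using cz norm_ge_zero[of "z - \<xi>"] by linarith
          thus ?thesis using Kpos unfolding unit_disc_def by (simp add: zero_less_mult_iff)
        qed
        ultimately show ?thesis using True HD by simp
      qed
    qed simp
    also have "ennreal (c0 * c1) = ennreal \<epsilon> * ennreal C1"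
    proof -
      have ne: "1 - \<eta> \<noteq> 0" "\<eta> \<noteq> 0" using eta by auto
      have "c0 * c1 = \<epsilon> * C1" unfolding c0_def c1_def C1_def
        by (simp add: power_divide power_mult_distrib) (simp add: field_simps ne power2_eq_square power3_eq_cube)
      thus ?thesis using ep C1pos by (simp add: ennreal_mult)
    qed
    finally have fin: "(\<integral>\<^sup>+ \<alpha>. indicator (A \<inter> Gamma_region (1/2) \<xi>) \<alpha> * ennreal (g \<alpha> / (1 - cmod \<alpha>)) \<partial>marea)
      \<le> ennreal \<epsilon> * ennreal C1 * (\<integral>\<^sup>+ z. indicator (Gamma_region \<beta> \<xi>) z * ennreal (g z / (1 - cmod z)) \<partial>marea)" .
    show ?thesis using fin unfolding Let_def A_def g_def by simp
  qed
  show ?thesis using main b1 b2 C1pos by blast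
qed

end
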